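(* Let $p$ be a prime and let $d_1,\dots,d_l$ be integers with $1\le d_\lambda\le p$. Then for every integer $s$ with $1\le s\le p-1$, \[ \mathrm{sht}_V(s)\le\frac{(s-1)D_V}{p}. \]
   Context: Here $D_V:=\sum_{\lambda=1}^{l}\frac{(d_\lambda-1)d_\lambda}{2}$ and, for a positive integer $j$ with $p\nmid j$, $\mathrm{sht}_V(j):=\sum_{\lambda=1}^{l}\sum_{i=1}^{d_\lambda-1}\lfloor ij/p\rfloor$. *)

theory Defs
  imports Complex_Main "HOL-Computational_Algebra.Primes"
begin

definition D_V :: "nat list \<Rightarrow> nat" where
  "D_V ds = (\<Sum>k<length ds. ((ds ! k - 1) * ds ! k) div 2)"

definition sht_V :: "nat \<Rightarrow> nat list \<Rightarrow> nat \<Rightarrow> nat" where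
  "sht_V p ds j = (\<Sum>k<length ds. \<Sum>i\<in>{1..<ds ! k}. (i * j) div p)"

end

theory Submission
  imports Defs "HOL-Number_Theory.Number_Theory"
begin

lemma sum_distinct_pos:
  "finite A \<Longrightarrow> 0 \<notin> A \<Longrightarrow> 2 * (\<Sum>x\<in>{1..<Suc (card A)}. x) \<le> 2 * (\<Sum>x\<in>A. (x::nat))"
proof (induction "card A" arbitrary: A)
  case 0
  then show ?case by simp
next
  case (Suc n)
  then have ne: "A \<noteq> {}" by auto
  define m where "m = Max A"
  have mA: "m \<in> A" using Suc ne m_def by simp
  have sub: "A \<subseteq> {1..m}" using Suc m_def by (auto simp: Suc_le_eq intro!: Nat.gr0I) 
  have "card A \<le> m" using card_mono[OF _ sub] by simp
  have cA: "card (A - {m}) = n" using Suc mA by simp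
  have IH: "2 * (\<Sum>x\<in>{1..<Suc n}. x) \<le> 2 * (\<Sum>x\<in>A - {m}. x)"
    using Suc.hyps(1)[of "A - {m}"] cA Suc.prems by auto
  have "(\<Sum>x\<in>{1..<Suc (card A)}. x) = (\<Sum>x\<in>{1..<Suc n}. x) + Suc n"
    using Suc.hyps(2)[symmetric] by simp
  moreover have "(\<Sum>x\<in>A. x) = (\<Sum>x\<in>A - {m}. x) + m"
    using Suc.prems mA by (simp add: sum.remove)
  ultimately show ?case using IH \<open>card A \<le> m\<close> Suc.hyps(2) by simp
qed

lemma gauss2: "2 * (\<Sum>i\<in>{1..<d}. i) = (d - 1) * (d::nat)"
proof (induction d)
  case 0 then show ?case by simp
next
  case (Suc d)
  show ?case
  proof (cases d)
    case 0 then show ?thesis by simp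
  next
    case (Suc e)
    have "{1..<Suc d} = insert d {1..<d}" using Suc by auto
    then have "(\<Sum>i\<in>{1..<Suc d}. i) = d + (\<Sum>i\<in>{1..<d}. i)" by simp
    then show ?thesis using Suc.IH Suc by (simp add: algebra_simps)
  qed
qed

lemma per_d:
  fixes p d s :: nat
  assumes "prime p" "d \<le> p" "1 \<le> s" "s < p"
  shows "p * (\<Sum>i\<in>{1..<d}. (i * s) div p) \<le> (s - 1) * ((d - 1) * d div 2)"
proof -
  define T where "T = (\<Sum>i\<in>{1..<d}. i)"
  have T2: "2 * T = (d - 1) * d" unfolding T_def by (rule gauss2)
  have Tdiv: "(d - 1) * d div 2 = T" using T2 by simp
  have split: "p * (\<Sum>i\<in>{1..<d}. (i * s) div p) + (\<Sum>i\<in>{1..<d}. (i * s) mod p) = s * T"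
    unfolding T_def sum_distrib_left sum.distrib[symmetric]
    by (rule sum.cong) (auto simp: mult.commute)
  have cop: "coprime s p" using assms
    by (metis coprime_commute le_less_trans less_not_refl2 not_one_le_zero prime_imp_coprime_nat
        dvd_imp_le zero_less_iff_neq_zero) 
  have inj: "inj_on (\<lambda>i. (i * s) mod p) {1..<d}"
  proof (rule inj_onI)
    fix i j assume i: "i \<in> {1..<d}" and j: "j \<in> {1..<d}" and e: "(i * s) mod p = (j * s) mod p"
    then have "[i * s = j * s] (mod p)" by (simp add: cong_def)
    then have "[i = j] (mod p)" using cop by (simp add: cong_mult_rcancel_nat)
    then show "i = j" using i j assms(2) by (simp add: cong_def)
  qed
  define A where "A = (\<lambda>i. (i * s) mod p) ` {1..<d}"
  have cardA: "card A = d - 1" unfolding A_def using card_image[OF inj] by simp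
  have z: "0 \<notin> A"
  proof
    assume "0 \<in> A"
    then obtain i where i: "i \<in> {1..<d}" "(i * s) mod p = 0" unfolding A_def by auto
    then have "p dvd i * s" by auto
    then have "p dvd i \<or> p dvd s" using assms(1) prime_dvd_mult_iff by blast
    then show False using i assms by (auto dest: dvd_imp_le)
  qed
  have sA: "(\<Sum>x\<in>A. x) = (\<Sum>i\<in>{1..<d}. (i * s) mod p)"
    unfolding A_def using sum.reindex[OF inj, of "\<lambda>x. x"] by (simp add: comp_def)
  have "2 * (\<Sum>x\<in>{1..<Suc (card A)}. x) \<le> 2 * (\<Sum>x\<in>A. x)"
    by (rule sum_distinct_pos[OF _ z]) (simp add: A_def)
  moreover have "(\<Sum>x\<in>{1..<Suc (card A)}. x) = T"
  proof (cases d)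
    case 0 then show ?thesis using cardA T_def by simp
  next
    case (Suc e) then have "Suc (card A) = d" using cardA by simp
    then show ?thesis using T_def by simp
  qed
  ultimately have "T \<le> (\<Sum>i\<in>{1..<d}. (i * s) mod p)" using sA by linarith
  then have "p * (\<Sum>i\<in>{1..<d}. (i * s) div p) \<le> s * T - T" using split by linarith
  also have "s * T - T = (s - 1) * T" by (simp add: diff_mult_distrib)
  finally show ?thesis using Tdiv by simp
qed

theorem lemma3p3:
  fixes p :: nat and ds :: "nat list" and s :: nat
  assumes "prime p"
    and "\<forall>d\<in>set ds. 1 \<le> d \<and> d \<le> p"
    and "1 \<le> s" and "s \<le> p - 1"
  shows "real (sht_V p ds s) \<le> (real s - 1) * real (D_V ds) / real p"
proof -
  have p0: "p > 0" using assms(1) prime_gt_0_nat by blast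
  have sp: "s < p" using assms p0 by linarith
  have "p * sht_V p ds s = (\<Sum>k<length ds. p * (\<Sum>i\<in>{1..<ds ! k}. (i * s) div p))"
    unfolding sht_V_def by (simp add: sum_distrib_left)
  also have "\<dots> \<le> (\<Sum>k<length ds. (s - 1) * ((ds ! k - 1) * ds ! k div 2))"
    by (rule sum_mono, rule per_d) (use assms sp nth_mem in auto)
  also have "\<dots> = (s - 1) * D_V ds" unfolding D_V_def by (simp add: sum_distrib_left)
  finally have "real (p * sht_V p ds s) \<le> real ((s - 1) * D_V ds)" by linarith
  then have "real p * real (sht_V p ds s) \<le> (real s - 1) * real (D_V ds)"
    using assms(3) by (simp add: of_nat_diff)
  then show ?thesis using p0 by (simp add: field_simps)
qed

end
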